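(* Let $\lambda$ be a partition, $\nu\in\mathcal{U}(\lambda)$, and $(x,y)=\nu/\lambda$. Let $u,v\ge0$ be integers, $c=(x+u,y+v)$, $c_1=(x+u,y)$ and $c_2=(x,y+v)$. Then \[ P^{q,t}_\lambda(\nu\mid c)=P^{q,t}_\lambda(\nu\mid c_1)\,P^{q,t}_\lambda(\nu\mid c_2). \]
   Context: Partitions are Young diagrams in French convention: cells $(x,y)\in\mathbb{Z}_{>0}^2$ with $x\le\lambda_y$; $\lambda'$ is the conjugate, with $\lambda_j=0$ for $j>\lambda'_1$ and $\lambda'_i=0$ for $i>\lambda_1$. $\mathcal{U}(\lambda)$ is the set of partitions obtained by adding one cell to $\lambda$. $\overline{\lambda}=\mathbb{Z}_{>0}^2\setminus\lambda$. For $c=(x,y)\in\overline{\lambda}$: ${\rm arm}_\lambda(c)=\{(i,y):\lambda_y<i<x\}$, ${\rm leg}_\lambda(c)=\{(x,j):\lambda'_x<j<y\}$, $a(c)=|{\rm arm}_\lambda(c)|$, $\ell(c)=|{\rm leg}_\lambda(c)|$; $c$ is an outer corner of $\lambda$ iff $a(c)=\ell(c)=0$. For $c'\in{\rm arm}_\lambda(c)\cup{\rm leg}_\lambda(c)$, $P(c\rightarrow c')=q^{a(c)-i}\frac{t^{\ell(c)}(1-q)}{1-q^{a(c)}t^{\ell(c)}}$ if $c'=(x-i,y)$, and $P(c\rightarrow c')=t^{j-1}\frac{1-t}{1-q^{a(c)}t^{\ell(c)}}$ if $c'=(x,y-j)$. The exterior $(q,t)$-hook walk from $c$ terminates if $c$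 is an outer corner, otherwise moves to $c'$ with probability $P(c\rightarrow c')$ and repeats; $P^{q,t}_\lambda(\nu\mid c)$ is the probability (a rational function in $q,t$) that it terminates at the cell $\nu/\lambda$. *)

theory Defs
  imports Main
begin

text \<open>Partitions: a function lam :: nat => nat, with lam y the length of row y (y >= 1),
  weakly decreasing, eventually zero, normalised by lam 0 = 0.  Cells are (x,y) with
  1 <= x <= lam y (French convention).\<close>

definition is_partition :: "(nat \<Rightarrow> nat) \<Rightarrow> bool" where
  "is_partition lam \<longleftrightarrow> lam 0 = 0 \<and> (\<forall>j\<ge>1. lam (Suc j) \<le> lam j) \<and> (\<exists>N. \<forall>j\<ge>N. lam j = 0)"

definition cells :: "(nat \<Rightarrow> nat) \<Rightarrow> (nat \<times> nat) set" where
  "cells lam = {(x, y). 1 \<le> x \<and> 1 \<le> y \<and> x \<le> lam y}"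

definition conj :: "(nat \<Rightarrow> nat) \<Rightarrow> nat \<Rightarrow> nat" where
  "conj lam x = (if x = 0 then 0 else card {j. 1 \<le> j \<and> x \<le> lam j})"

text \<open>nu is in U(lam), and nu/lam is the cell c.\<close>
definition adds_cell :: "(nat \<Rightarrow> nat) \<Rightarrow> (nat \<Rightarrow> nat) \<Rightarrow> nat \<times> nat \<Rightarrow> bool" where
  "adds_cell lam nu c \<longleftrightarrow> is_partition lam \<and> is_partition nu \<and>
     c \<notin> cells lam \<and> cells nu = insert c (cells lam)"

definition arm :: "(nat \<Rightarrow> nat) \<Rightarrow> nat \<times> nat \<Rightarrow> (nat \<times> nat) set" where
  "arm lam c = {(i, snd c) | i. lam (snd c) < i \<and> i < fst c}"

definition leg :: "(nat \<Rightarrow> nat) \<Rightarrow> nat \<times> nat \<Rightarrow> (nat \<times> nat) set" where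
  "leg lam c = {(fst c, j) | j. conj lam (fst c) < j \<and> j < snd c}"

definition armlen :: "(nat \<Rightarrow> nat) \<Rightarrow> nat \<times> nat \<Rightarrow> nat" where
  "armlen lam c = card (arm lam c)"

definition leglen :: "(nat \<Rightarrow> nat) \<Rightarrow> nat \<times> nat \<Rightarrow> nat" where
  "leglen lam c = card (leg lam c)"

definition trans_prob :: "'a::field \<Rightarrow> 'a \<Rightarrow> (nat \<Rightarrow> nat) \<Rightarrow> nat \<times> nat \<Rightarrow> nat \<times> nat \<Rightarrow> 'a" where
  "trans_prob q t lam c c' =
     (let a = armlen lam c; l = leglen lam c in
      if c' \<in> arm lam c then
        q ^ (a - (fst c - fst c')) * (t ^ l * (1 - q)) / (1 - q ^ a * t ^ l)
      else if c' \<in> leg lam c then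
        t ^ (snd c - snd c' - 1) * (1 - t) / (1 - q ^ a * t ^ l)
      else 0)"

lemma arm_less: "c' \<in> arm lam c \<Longrightarrow> fst c' + snd c' < fst c + snd c"
  by (auto simp: arm_def)

lemma leg_less: "c' \<in> leg lam c \<Longrightarrow> fst c' + snd c' < fst c + snd c"
  by (auto simp: leg_def)

text \<open>hookwalk q t lam c d = probability that the exterior (q,t)-hook walk on lam started at c
  terminates at the cell d.\<close>
function hookwalk :: "'a::field \<Rightarrow> 'a \<Rightarrow> (nat \<Rightarrow> nat) \<Rightarrow> nat \<times> nat \<Rightarrow> nat \<times> nat \<Rightarrow> 'a" where
  "hookwalk q t lam c d =
     (if armlen lam c = 0 \<and> leglen lam c = 0 then (if c = d then 1 else 0)
      else (\<Sum>c'\<in>arm lam c \<union> leg lam c. trans_prob q t lam c c' * hookwalk q t lam c' d))"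
  by pat_completeness auto
termination
  by (relation "measure (\<lambda>(q, t, lam, c, d). fst c + snd c)")
     (auto dest: arm_less leg_less)

declare hookwalk.simps[simp del]

definition hook_prob :: "'a::field \<Rightarrow> 'a \<Rightarrow> (nat \<Rightarrow> nat) \<Rightarrow> (nat \<Rightarrow> nat) \<Rightarrow> nat \<times> nat \<Rightarrow> 'a" where
  "hook_prob q t lam nu c = hookwalk q t lam c (THE d. cells nu = insert d (cells lam) \<and> d \<notin> cells lam)"

end

theory Submission
  imports Defs
begin

lemma factor_abstract:
  fixes F :: "nat \<Rightarrow> nat \<Rightarrow> 'a::field" and s r :: "nat \<Rightarrow> nat"
  assumes F00: "F 0 0 = 1" and s0: "s 0 = 0" and r0: "r 0 = 0"
    and nz: "\<And>m n. m + n > 0 \<Longrightarrow> 1 - q^(m + s n) * t^(n + r m) \<noteq> 0"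
    and rec: "\<And>m n. m + n > 0 \<Longrightarrow> F m n * (1 - q^(m + s n) * t^(n + r m)) =
        q^(s n) * t^(n + r m) * (1-q) * (\<Sum>k<m. q^k * F k n) + (\<Sum>k<n. t^(n-1-k) * (1-t) * F m k)"
  shows "F m n = F m 0 * F 0 n"
proof (induction "m+n" arbitrary: m n rule: less_induct)
  case less
  show ?case
  proof (cases "m = 0 \<or> n = 0")
    case True thus ?thesis using F00 by auto
  next
    case False
    hence mn: "m>0" "n>0" by auto
    have IH1: "F k n = F k 0 * F 0 n" if "k<m" for k using less(1)[of k n] that by simp
    have IH2: "F m k = F m 0 * F 0 k" if "k<n" for k using less(1)[of m k] that by simp
    have Rm: "F m 0 * (1 - q^m * t^(r m)) = t^(r m) * (1-q) * (\<Sum>k<m. q^k * F k 0)"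
      using rec[of m 0] mn s0 by simp
    have Rn: "F 0 n * (1 - q^(s n) * t^n) = (\<Sum>k<n. t^(n-1-k) * (1-t) * F 0 k)"
      using rec[of 0 n] mn r0 by simp
    define D where "D = 1 - q^(m + s n) * t^(n + r m)"
    have D: "D \<noteq> 0" using nz mn D_def by auto
    have "F m n * D = q^(s n) * t^(n + r m) * (1-q) * (\<Sum>k<m. q^k * F k n) + (\<Sum>k<n. t^(n-1-k) * (1-t) * F m k)"
      using rec mn D_def by auto
    also have "(\<Sum>k<m. q^k * F k n) = F 0 n * (\<Sum>k<m. q^k * F k 0)"
      unfolding sum_distrib_left by (rule sum.cong[OF refl], subst IH1) (auto simp: mult_ac)
    also have "(\<Sum>k<n. t^(n-1-k) * (1-t) * F m k) = F m 0 * (\<Sum>k<n. t^(n-1-k) * (1-t) * F 0 k)"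
      unfolding sum_distrib_left by (rule sum.cong[OF refl], subst IH2) (auto simp: mult_ac)
    also have "q^(s n) * t^(n + r m) * (1-q) * (F 0 n * (\<Sum>k<m. q^k * F k 0)) + F m 0 * (\<Sum>k<n. t^(n-1-k) * (1-t) * F 0 k)
       = q^(s n) * t^n * F 0 n * (t^(r m) * (1-q) * (\<Sum>k<m. q^k * F k 0)) + F m 0 * (\<Sum>k<n. t^(n-1-k) * (1-t) * F 0 k)"
      by (simp add: power_add algebra_simps)
    also have "\<dots> = q^(s n) * t^n * F 0 n * (F m 0 * (1 - q^m * t^(r m))) + F m 0 * (F 0 n * (1 - q^(s n) * t^n))"
      using Rm Rn by simp
    also have "\<dots> = F m 0 * F 0 n * D" by (simp add: D_def power_add algebra_simps)
    finally show ?thesis using D by simp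
  qed
qed

lemma hw_zero: "fst c < fst d \<or> snd c < snd d \<Longrightarrow> hookwalk q t lam c d = 0"
proof (induction q t lam c d rule: hookwalk.induct)
  case (1 q t lam c d)
  show ?case
  proof (cases "armlen lam c = 0 \<and> leglen lam c = 0")
    case True then show ?thesis using 1(2) by (auto simp: hookwalk.simps)
  next
    case False
    have "\<forall>c'\<in>arm lam c \<union> leg lam c. hookwalk q t lam c' d = 0"
    proof
      fix c' assume c': "c' \<in> arm lam c \<union> leg lam c"
      have "fst c' < fst d \<or> snd c' < snd d" using c' 1(2) by (auto simp: arm_def leg_def)
      then show "hookwalk q t lam c' d = 0" using 1(1)[OF False c'] by blast
    qed
    moreover have "hookwalk q t lam c d = (\<Sum>c'\<in>arm lam c \<union> leg lam c. trans_prob q t lam c c' * hookwalk q t lam c' d)"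
      using False by (simp only: hookwalk.simps[of q t lam c d] if_False)
    ultimately show ?thesis by simp
  qed
qed

lemma part_mono:
  assumes "is_partition lam" "1 \<le> i" "i \<le> j" shows "lam j \<le> lam i"
  using assms(3)
proof (induction j rule: dec_induct)
  case base show ?case by simp
next
  case (step n)
  have "lam (Suc n) \<le> lam n" using assms(1,2) step(1) unfolding is_partition_def by auto
  then show ?case using step.IH by linarith
qed

lemma arm_eq: "arm lam (X, Y) = (\<lambda>i. (i, Y)) ` {lam Y<..<X}"
  by (auto simp: arm_def)

lemma leg_eq: "leg lam (X, Y) = (\<lambda>j. (X, j)) ` {conj lam X<..<Y}"
  by (auto simp: leg_def)

lemma armlen_eq: "armlen lam (X, Y) = X - Suc (lam Y)"
  unfolding armlen_def arm_eq by (subst card_image) (auto simp: inj_on_def)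

lemma leglen_eq: "leglen lam (X, Y) = Y - Suc (conj lam X)"
  unfolding leglen_def leg_eq by (subst card_image) (auto simp: inj_on_def)

lemma sum_shift_helper: "(\<Sum>i\<in>{x..<x+m}. g i) = (\<Sum>k<m. g (x+k))" for x m :: nat
  by (induction m) (auto simp: atLeastLessThanSuc add.commute)

theorem lemma6p6:
  fixes q t :: "'a::field"
    and lam nu :: "nat \<Rightarrow> nat"
    and x y u v :: nat
  assumes generic: "\<And>a l. a + l > 0 \<Longrightarrow> q ^ a * t ^ l \<noteq> 1"
    and nu: "adds_cell lam nu (x, y)"
  shows "hook_prob q t lam nu (x + u, y + v) =
           hook_prob q t lam nu (x + u, y) * hook_prob q t lam nu (x, y + v)"
proof -
  have P: "is_partition lam" and Pn: "is_partition nu" and notin: "(x,y) \<notin> cells lam"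
    and ceq: "cells nu = insert (x,y) (cells lam)" using nu unfolding adds_cell_def by auto
  have "(x,y) \<in> cells nu" using ceq by auto
  hence x1: "1 \<le> x" "1 \<le> y" "x \<le> nu y" by (auto simp: cells_def)
  have lamy: "lam y < x" using notin x1 by (auto simp: cells_def)
  have lamy2: "lam y = x - 1"
  proof (cases "x = 1")
    case True then show ?thesis using lamy by simp
  next
    case False
    have "(x-1,y) \<in> cells nu" using x1 False by (auto simp: cells_def)
    hence "(x-1,y) \<in> cells lam" using ceq False x1 by auto
    then show ?thesis using lamy by (auto simp: cells_def)
  qed
  have lamY: "lam Y \<le> x - 1" if "y \<le> Y" for Y
    using part_mono[OF P x1(2) that] lamy2 by simp
  have conjX: "conj lam X \<le> y - 1" if "x \<le> X" for X
  proof -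
    have "{j. 1\<le>j \<and> X \<le> lam j} \<subseteq> {1..<y}"
    proof
      fix j assume "j \<in> {j. 1\<le>j \<and> X \<le> lam j}"
      then have j: "1 \<le> j" "X \<le> lam j" by auto
      have "j < y"
      proof (rule ccontr)
        assume "\<not> j < y"
        then have "lam j \<le> x - 1" using lamY by simp
        then show False using j that x1 by linarith
      qed
      then show "j \<in> {1..<y}" using j by auto
    qed
    then have "card {j. 1\<le>j \<and> X \<le> lam j} \<le> card {1..<y}" by (intro card_mono) auto
    then show ?thesis using that x1 by (simp add: conj_def)
  qed
  have conjx: "conj lam x = y - 1"
  proof -
    have "{j. 1\<le>j \<and> x \<le> lam j} = {1..<y}"
    proof
      show "{j. 1\<le>j \<and> x \<le> lam j} \<subseteq> {1..<y}"
      proof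
        fix j assume "j \<in> {j. 1\<le>j \<and> x \<le> lam j}"
        then have j: "1 \<le> j" "x \<le> lam j" by auto
        have "j < y"
        proof (rule ccontr)
          assume "\<not> j < y"
          then have "lam j \<le> x - 1" using lamY by simp
          then show False using j x1 by linarith
        qed
        then show "j \<in> {1..<y}" using j by auto
      qed
    next
      show "{1..<y} \<subseteq> {j. 1\<le>j \<and> x \<le> lam j}"
      proof
        fix j assume j: "j \<in> {1..<y}"
        have "nu y \<le> nu (y-1)" using part_mono[OF Pn, of "y-1" y] j by auto
        hence "(x,y-1) \<in> cells nu" using x1 j by (auto simp: cells_def)
        hence "(x,y-1) \<in> cells lam" using ceq j by auto
        hence "x \<le> lam (y-1)" by (auto simp: cells_def)
        moreover have "lam (y-1) \<le> lam j" using part_mono[OF P, of j "y-1"] j by auto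
        ultimately show "j \<in> {j. 1\<le>j \<and> x \<le> lam j}" using j by auto
      qed
    qed
    then show ?thesis using x1 by (simp add: conj_def)
  qed
  have dthe: "(THE d. cells nu = insert d (cells lam) \<and> d \<notin> cells lam) = (x,y)"
  proof (rule the_equality)
    show "cells nu = insert (x,y) (cells lam) \<and> (x,y) \<notin> cells lam" using ceq notin by auto
  next
    fix d assume "cells nu = insert d (cells lam) \<and> d \<notin> cells lam"
    then show "d = (x,y)" using ceq notin by (metis insertCI insertE)
  qed
  define F where "F m n = hookwalk q t lam (x+m, y+n) (x,y)" for m n
  define s where "s n = x - Suc (lam (y+n))" for n
  define r where "r m = y - Suc (conj lam (x+m))" for m
  have al: "armlen lam (x+m, y+n) = m + s n" for m n
    using lamY[of "y+n"] x1 by (simp add: armlen_eq s_def)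
  have ll: "leglen lam (x+m, y+n) = n + r m" for m n
    using conjX[of "x+m"] x1 by (simp add: leglen_eq r_def)
  have s0: "s 0 = 0" using lamy2 x1 by (simp add: s_def)
  have r0: "r 0 = 0" using conjx x1 by (simp add: r_def)
  have F00: "F 0 0 = 1"
    using al[of 0 0] ll[of 0 0] s0 r0 by (simp add: F_def hookwalk.simps[of q t lam "(x,y)" "(x,y)"])
  have nz: "1 - q^(m + s n) * t^(n + r m) \<noteq> 0" if "m + n > 0" for m n
    using generic[of "m + s n" "n + r m"] that by auto
  have rec: "F m n * (1 - q^(m + s n) * t^(n + r m)) =
        q^(s n) * t^(n + r m) * (1-q) * (\<Sum>k<m. q^k * F k n) + (\<Sum>k<n. t^(n-1-k) * (1-t) * F m k)"
    if mn: "m + n > 0" for m n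
  proof -
    define X where "X = x + m"
    define Y where "Y = y + n"
    define a where "a = m + s n"
    define l where "l = n + r m"
    define D where "D = 1 - q^a * t^l"
    have D0: "D \<noteq> 0" using nz[OF mn] by (simp add: D_def a_def l_def)
    have aX: "armlen lam (X,Y) = a" using al by (simp add: X_def Y_def a_def)
    have lX: "leglen lam (X,Y) = l" using ll by (simp add: X_def Y_def l_def)
    have nt: "\<not> (armlen lam (X,Y) = 0 \<and> leglen lam (X,Y) = 0)" using aX lX mn a_def l_def by auto
    have lamYY: "lam Y < x" using lamY[of Y] x1 by (simp add: Y_def)
    have conjXX: "conj lam X < y" using conjX[of X] x1 by (simp add: X_def)
    let ?g = "\<lambda>c'. trans_prob q t lam (X,Y) c' * hookwalk q t lam c' (x,y)"
    have fa: "finite (arm lam (X,Y))" "finite (leg lam (X,Y))" by (auto simp: arm_eq leg_eq)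
    have dj: "arm lam (X,Y) \<inter> leg lam (X,Y) = {}" by (auto simp: arm_def leg_def)
    have "F m n = (\<Sum>c'\<in>arm lam (X,Y) \<union> leg lam (X,Y). ?g c')"
      unfolding F_def X_def[symmetric] Y_def[symmetric]
      using nt by (simp only: hookwalk.simps[of q t lam "(X,Y)" "(x,y)"] if_False)
    also have "\<dots> = (\<Sum>c'\<in>arm lam (X,Y). ?g c') + (\<Sum>c'\<in>leg lam (X,Y). ?g c')"
      by (rule sum.union_disjoint[OF fa dj])
    also have "(\<Sum>c'\<in>arm lam (X,Y). ?g c') = (\<Sum>i\<in>{lam Y<..<X}. ?g (i,Y))"
      unfolding arm_eq by (subst sum.reindex) (auto simp: inj_on_def)
    also have "\<dots> = (\<Sum>i\<in>{x..<X}. ?g (i,Y))"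
      by (rule sum.mono_neutral_right) (use lamYY in \<open>auto simp: hw_zero\<close>)
    also have "\<dots> = (\<Sum>k<m. ?g (x+k,Y))"
      unfolding X_def by (rule sum_shift_helper)
    also have "\<dots> = (\<Sum>k<m. q^(s n + k) * (t^l * (1-q)) / D * F k n)"
    proof (rule sum.cong[OF refl])
      fix k assume k: "k \<in> {..<m}"
      have inarm: "(x+k, Y) \<in> arm lam (X,Y)" using k lamYY by (auto simp: arm_def X_def)
      have "a - (X - (x+k)) = s n + k" using k by (simp add: a_def X_def)
      then show "?g (x+k,Y) = q^(s n + k) * (t^l * (1-q)) / D * F k n"
        using inarm aX lX by (simp add: trans_prob_def Let_def D_def F_def Y_def)
    qed
    also have "(\<Sum>c'\<in>leg lam (X,Y). ?g c') = (\<Sum>j\<in>{conj lam X<..<Y}. ?g (X,j))"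
      unfolding leg_eq by (subst sum.reindex) (auto simp: inj_on_def)
    also have "\<dots> = (\<Sum>j\<in>{y..<Y}. ?g (X,j))"
      by (rule sum.mono_neutral_right) (use conjXX in \<open>auto simp: hw_zero\<close>)
    also have "\<dots> = (\<Sum>k<n. ?g (X,y+k))"
      unfolding Y_def by (rule sum_shift_helper)
    also have "\<dots> = (\<Sum>k<n. t^(n-1-k) * (1-t) / D * F m k)"
    proof (rule sum.cong[OF refl])
      fix k assume k: "k \<in> {..<n}"
      have inleg: "(X, y+k) \<in> leg lam (X,Y)" using k conjXX by (auto simp: leg_def Y_def)
      have notarm: "(X, y+k) \<notin> arm lam (X,Y)" by (auto simp: arm_def)
      have "Y - (y+k) - 1 = n - 1 - k" using k by (simp add: Y_def)
      then show "?g (X,y+k) = t^(n-1-k) * (1-t) / D * F m k"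
        using inleg notarm aX lX by (simp add: trans_prob_def Let_def D_def F_def X_def)
    qed
    finally have eq: "F m n = (\<Sum>k<m. q^(s n + k) * (t^l * (1-q)) / D * F k n) + (\<Sum>k<n. t^(n-1-k) * (1-t) / D * F m k)" .
    have e1: "(\<Sum>k<m. q^(s n + k) * (t^l * (1-q)) / D * F k n) = q^(s n) * t^l * (1-q) * (\<Sum>k<m. q^k * F k n) / D"
      by (simp add: sum_distrib_left sum_divide_distrib power_add mult_ac)
    have e2: "(\<Sum>k<n. t^(n-1-k) * (1-t) / D * F m k) = (\<Sum>k<n. t^(n-1-k) * (1-t) * F m k) / D"
      by (simp add: sum_divide_distrib mult_ac)
    have "F m n * D = q^(s n) * t^l * (1-q) * (\<Sum>k<m. q^k * F k n) + (\<Sum>k<n. t^(n-1-k) * (1-t) * F m k)"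
      using D0 unfolding eq e1 e2 by (simp add: field_simps)
    then show ?thesis by (simp add: D_def a_def l_def)
  qed
  have "F u v = F u 0 * F 0 v"
    by (rule factor_abstract[of F s r q t, OF F00 s0 r0 nz rec]) auto
  then show ?thesis unfolding hook_prob_def dthe F_def by simp
qed

end
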